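(* Assume that $f_a(0)=-\infty$ for every $a\in A$. Let $\theta\in\mathbb R^n$ and let $p^*\in\mathcal M_1^+(A)$ with $I(p^* )-\sum_j\theta_j\langle p^*,H_j\rangle$ finite. Then $p^*$ satisfies the variational principle with parameters $\theta$ if and only if there exists $\alpha\in\mathbb R$ such that $p^*_a>0$ and $$f_a(p^*_a)=-\alpha-\sum_{j=1}^n\theta_jH_j(a)\qquad\text{for all }a\in A.$$
   Context: Let $A$ be a finite or countable set and $\mathcal M_1^+(A)$ the set of probability distributions $p=(p_a)_{a\in A}$ on $A$. For each $a\in A$ let $h_a:[0,1]\to\mathbb R$ be continuous and strictly concave with $h_a(0)=h_a(1)=0$, differentiable on $(0,1)$ with $h_a'(u)=-f_a(u)$, where $f_a$ extends to a continuous (necessarily strictly increasing) function on $(0,1]$; put $f_a(0)=\lim_{u\downarrow0}f_a(u)\in[-\infty,\infty)$. The generalised entropy is $I(p)=\sum_{a\in A}h_a(p_a)\in[0,+\infty]$. Let $H_1,\dots,H_n:A\to\mathbb R$ be functions bounded from below, and write $\langle p,X\rangle=\sum_{a}p_aX(a)$. A distribution $p^*\in\mathcal M_1^+(A)$ satisfies the variational principle with parameters $\theta=(\theta_1,\dots,\theta_n)\in\mathbb R^n$ if $+\infty> I(p^* )-\sum_{j=1}^n\theta_j\langle p^*,H_j\rangle\ \ge\ I(p)-\sum_{j=1}^n\theta_j\langle p,H_j\rangle$ for all $p\in\mathcal M_1^+(A)$. *)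

theory Defs
  imports "HOL-Analysis.Analysis" "HOL-Library.Extended_Real"
begin

definition strictly_concave_on :: "real set \<Rightarrow> (real \<Rightarrow> real) \<Rightarrow> bool" where
  "strictly_concave_on S g \<longleftrightarrow> convex S \<and>
     (\<forall>x\<in>S. \<forall>y\<in>S. x \<noteq> y \<longrightarrow> (\<forall>t. 0 < t \<and> t < 1 \<longrightarrow>
        g ((1 - t) * x + t * y) > (1 - t) * g x + t * g y))"

definition prob_dists :: "'a set \<Rightarrow> ('a \<Rightarrow> real) set" where
  "prob_dists A = {p. (\<forall>a\<in>A. 0 \<le> p a) \<and> (p has_sum 1) A}"

text \<open>Generalised entropy I(p) = sum of h_a(p_a), a value in [0,+infinity].
  (All summands are nonnegative, since h_a is concave on [0,1] and vanishes at 0 and 1.)\<close>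
definition gen_entropy :: "'a set \<Rightarrow> ('a \<Rightarrow> real \<Rightarrow> real) \<Rightarrow> ('a \<Rightarrow> real) \<Rightarrow> ereal" where
  "gen_entropy A h p = enn2ereal (\<Sum>\<^sub>\<infinity>a\<in>A. ennreal (h a (p a)))"

text \<open>The pairing <p,X> = sum of p_a X(a), as an extended real (positive part minus
  negative part); for X bounded below it lies in (-infinity, +infinity].\<close>
definition pair :: "'a set \<Rightarrow> ('a \<Rightarrow> real) \<Rightarrow> ('a \<Rightarrow> real) \<Rightarrow> ereal" where
  "pair A p X = enn2ereal (\<Sum>\<^sub>\<infinity>a\<in>A. ennreal (p a * max (X a) 0))
              - enn2ereal (\<Sum>\<^sub>\<infinity>a\<in>A. ennreal (p a * max (- X a) 0))"

definition vp_terms :: "'a set \<Rightarrow> ('a \<Rightarrow> real \<Rightarrow> real) \<Rightarrow> nat \<Rightarrow> (nat \<Rightarrow> 'a \<Rightarrow> real)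
    \<Rightarrow> (nat \<Rightarrow> real) \<Rightarrow> ('a \<Rightarrow> real) \<Rightarrow> ereal set" where
  "vp_terms A h n H \<theta> p =
     insert (gen_entropy A h p) ((\<lambda>j. - (ereal (\<theta> j) * pair A p (H j))) ` {1..n})"

text \<open>The expression I(p) - sum_j theta_j <p,H_j> is well defined unless it involves
  both +infinity and -infinity.\<close>
definition vp_defined :: "'a set \<Rightarrow> ('a \<Rightarrow> real \<Rightarrow> real) \<Rightarrow> nat \<Rightarrow> (nat \<Rightarrow> 'a \<Rightarrow> real)
    \<Rightarrow> (nat \<Rightarrow> real) \<Rightarrow> ('a \<Rightarrow> real) \<Rightarrow> bool" where
  "vp_defined A h n H \<theta> p \<longleftrightarrow>
     \<not> (\<infinity> \<in> vp_terms A h n H \<theta> p \<and> - \<infinity> \<in> vp_terms A h n H \<theta> p)"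

definition vp_obj :: "'a set \<Rightarrow> ('a \<Rightarrow> real \<Rightarrow> real) \<Rightarrow> nat \<Rightarrow> (nat \<Rightarrow> 'a \<Rightarrow> real)
    \<Rightarrow> (nat \<Rightarrow> real) \<Rightarrow> ('a \<Rightarrow> real) \<Rightarrow> ereal" where
  "vp_obj A h n H \<theta> p = gen_entropy A h p - (\<Sum>j\<in>{1..n}. ereal (\<theta> j) * pair A p (H j))"

definition variational_principle :: "'a set \<Rightarrow> ('a \<Rightarrow> real \<Rightarrow> real) \<Rightarrow> nat
    \<Rightarrow> (nat \<Rightarrow> 'a \<Rightarrow> real) \<Rightarrow> (nat \<Rightarrow> real) \<Rightarrow> ('a \<Rightarrow> real) \<Rightarrow> bool" where
  "variational_principle A h n H \<theta> ps \<longleftrightarrow>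
     ps \<in> prob_dists A \<and> vp_defined A h n H \<theta> ps \<and> vp_obj A h n H \<theta> ps < \<infinity> \<and>
     (\<forall>p\<in>prob_dists A. vp_defined A h n H \<theta> p \<longrightarrow> vp_obj A h n H \<theta> p \<le> vp_obj A h n H \<theta> ps)"

end

theory Submission
  imports Defs
begin

lemma enn_infsum_summable:
  fixes g :: "'a \<Rightarrow> real"
  assumes "g summable_on A" "\<And>x. x \<in> A \<Longrightarrow> 0 \<le> g x"
  shows "(\<Sum>\<^sub>\<infinity>a\<in>A. ennreal (g a)) = ennreal (infsum g A)"
proof -
  have \<section>: "\<And>F. \<lbrakk>finite F; F \<subseteq> A\<rbrakk> \<Longrightarrow> sum (ennreal \<circ> g) F = ennreal (sum g F)"
    by (metis (mono_tags, lifting) comp_def assms(2) subsetD sum.cong sum_ennreal)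
  then have "ennreal (infsum g A) = infsum (ennreal \<circ> g) A"
    by (simp add: infsum_comm_additive_general assms(1))
  then show ?thesis by (simp add: comp_def)
qed

lemma enn_infsum_not_summable:
  fixes g :: "'a \<Rightarrow> real"
  assumes "\<not> g summable_on A" "\<And>x. x \<in> A \<Longrightarrow> 0 \<le> g x"
  shows "(\<Sum>\<^sub>\<infinity>a\<in>A. ennreal (g a)) = \<infinity>"
proof (rule ccontr)
  assume ne: "(\<Sum>\<^sub>\<infinity>a\<in>A. ennreal (g a)) \<noteq> \<infinity>"
  let ?S = "(\<Sum>\<^sub>\<infinity>a\<in>A. ennreal (g a))"
  have "sum g F \<le> enn2real ?S" if "finite F" "F \<subseteq> A" for F
  proof -
    have "ennreal (sum g F) = (\<Sum>a\<in>F. ennreal (g a))"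
      using that assms(2) by (subst sum_ennreal) auto
    also have "\<dots> \<le> ?S"
    proof -
      have "(\<Sum>a\<in>F. ennreal (g a)) = (\<Sum>\<^sub>\<infinity>a\<in>F. ennreal (g a))" using that by simp
      also have "\<dots> \<le> ?S"
        apply (rule infsum_mono_neutral)
        apply (rule nonneg_summable_on_complete, simp)+
        using that by auto
      finally show ?thesis .
    qed
    finally have "ennreal (sum g F) \<le> ?S" .
    moreover have "?S < top" using ne by (simp add: less_top)
    ultimately have "enn2real (ennreal (sum g F)) \<le> enn2real ?S" by (rule enn2real_mono)
    moreover have "0 \<le> sum g F" using that assms(2) by (intro sum_nonneg) auto
    ultimately show ?thesis by simp
  qed
  then have "bdd_above (sum g ` {F. F\<subseteq>A \<and> finite F})"
    by (auto intro!: bdd_aboveI)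
  then have "g summable_on A" by (intro nonneg_bdd_above_summable_on assms(2))
  with assms(1) show False by simp
qed

lemma has_sum_diff':
  fixes f g :: "'a \<Rightarrow> real"
  assumes "(f has_sum a) A" "(g has_sum b) A"
  shows "((\<lambda>x. f x - g x) has_sum (a - b)) A"
proof -
  have "((\<lambda>x. - g x) has_sum (- b)) A" using assms(2) by (simp add: has_sum_uminus)
  from has_sum_add[OF assms(1) this] show ?thesis by simp
qed

lemma summable_on_diff':
  fixes f g :: "'a \<Rightarrow> real"
  assumes "f summable_on A" "g summable_on A"
  shows "(\<lambda>x. f x - g x) summable_on A"
proof -
  obtain a b where "(f has_sum a) A" "(g has_sum b) A" using assms by (auto simp: summable_on_def)
  from has_sum_diff'[OF this] show ?thesis by (auto simp: summable_on_def)
qed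

lemma has_sum_sum':
  fixes f :: "'j \<Rightarrow> 'a \<Rightarrow> real"
  assumes "finite J" "\<And>j. j \<in> J \<Longrightarrow> (f j has_sum s j) A"
  shows "((\<lambda>x. \<Sum>j\<in>J. f j x) has_sum (\<Sum>j\<in>J. s j)) A"
  using assms
proof (induction J rule: finite_induct)
  case empty then show ?case by simp
next
  case (insert j J)
  then show ?case by (simp add: has_sum_add)
qed

lemma sum_Minfty':
  fixes g :: "'j \<Rightarrow> ereal"
  assumes "finite J" "\<And>j. j \<in> J \<Longrightarrow> g j \<noteq> \<infinity>" "j0 \<in> J" "g j0 = -\<infinity>"
  shows "(\<Sum>j\<in>J. g j) = -\<infinity>"
  using assms
proof (induction J rule: finite_induct)
  case empty then show ?case by simp
next
  case (insert j J)
  show ?case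
  proof (cases "j = j0")
    case True
    have "(\<Sum>j\<in>J. g j) \<noteq> \<infinity>" using insert by (subst sum_Pinfty) auto
    then show ?thesis using insert True by simp
  next
    case False
    then have "(\<Sum>j\<in>J. g j) = -\<infinity>" using insert by auto
    then show ?thesis using insert by simp
  qed
qed

lemma has_sum_finite_change:
  fixes f g :: "'a \<Rightarrow> real"
  assumes "(f has_sum s) A" "finite F" "\<And>x. x \<in> A - F \<Longrightarrow> g x = f x"
  shows "(g has_sum (s + (\<Sum>x\<in>A \<inter> F. g x - f x))) A"
proof -
  have "((\<lambda>x. g x - f x) has_sum (\<Sum>x\<in>A \<inter> F. g x - f x)) (A \<inter> F)"
    using assms(2) by (intro has_sum_finiteI) auto
  then have d: "((\<lambda>x. g x - f x) has_sum (\<Sum>x\<in>A \<inter> F. g x - f x)) A"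
    by (rule has_sum_cong_neutral[THEN iffD1, rotated -1]) (use assms(3) in auto)
  show ?thesis using has_sum_add[OF assms(1) d] by simp
qed

locale vp_setup =
  fixes A :: "'a set" and h f :: "'a \<Rightarrow> real \<Rightarrow> real"
    and n :: nat and H :: "nat \<Rightarrow> 'a \<Rightarrow> real" and \<theta> :: "nat \<Rightarrow> real"
  assumes h_cont: "\<And>a. a \<in> A \<Longrightarrow> continuous_on {0..1} (h a)"
    and h_strict_concave: "\<And>a. a \<in> A \<Longrightarrow> strictly_concave_on {0..1} (h a)"
    and h_0: "\<And>a. a \<in> A \<Longrightarrow> h a 0 = 0"
    and h_1: "\<And>a. a \<in> A \<Longrightarrow> h a 1 = 0"
    and h_deriv: "\<And>a u. a \<in> A \<Longrightarrow> 0 < u \<Longrightarrow> u < 1 \<Longrightarrow>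
                    (h a has_real_derivative - f a u) (at u)"
    and f_at_0: "\<And>a. a \<in> A \<Longrightarrow> filterlim (f a) at_bot (at_right 0)"
    and H_bdd_below: "\<And>j. j \<in> {1..n} \<Longrightarrow> \<exists>c. \<forall>a\<in>A. c \<le> H j a"
begin

definition K where "K a = (\<Sum>j\<in>{1..n}. \<theta> j * H j a)"
definition G where "G a u = h a u - u * K a"
definition J where "J = {j\<in>{1..n}. \<theta> j \<noteq> 0}"
definition fin where "fin p \<longleftrightarrow> (\<lambda>a. h a (p a)) summable_on A \<and>
   (\<forall>j\<in>J. (\<lambda>a. p a * max (H j a) 0) summable_on A)"

lemma J_sub: "J \<subseteq> {1..n}" "finite J" by (auto simp: J_def)

lemma sum_J: "(\<Sum>j\<in>{1..n}. \<theta> j * X j) = (\<Sum>j\<in>J. \<theta> j * X j)"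
  unfolding J_def by (rule sum.mono_neutral_right) auto

lemma prob_bounds:
  assumes "p \<in> prob_dists A" "a \<in> A"
  shows "0 \<le> p a" "p a \<le> 1"
proof -
  from assms have nn: "\<And>x. x \<in> A \<Longrightarrow> 0 \<le> p x" and hs: "(p has_sum 1) A"
    by (auto simp: prob_dists_def)
  show "0 \<le> p a" using nn assms(2) .
  have "sum p {a} \<le> infsum p A"
    by (rule finite_sum_le_infsum) (use hs nn assms(2) in \<open>auto simp: has_sum_iff\<close>)
  then show "p a \<le> 1" using hs by (simp add: has_sum_iff)
qed

lemma concave_le:
  assumes "a \<in> A" "x \<in> {0..1}" "y \<in> {0..1}" "0 \<le> t" "t \<le> 1"
  shows "(1-t) * h a x + t * h a y \<le> h a ((1-t) * x + t * y)"
proof (cases "x = y \<or> t = 0 \<or> t = 1")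
  case True
  then show ?thesis by (auto simp: algebra_simps)
next
  case False
  then have "0 < t" "t < 1" using assms by auto
  then have "(1-t) * h a x + t * h a y < h a ((1-t) * x + t * y)"
    using h_strict_concave[OF assms(1)] assms False unfolding strictly_concave_on_def by blast
  then show ?thesis by simp
qed

lemma h_nonneg:
  assumes "a \<in> A" "0 \<le> u" "u \<le> 1"
  shows "0 \<le> h a u"
  using concave_le[OF assms(1), of 0 1 u] assms h_0 h_1 by simp

lemma tangent:
  assumes "a \<in> A" "0 < x" "x < 1" "0 \<le> u" "u \<le> 1"
  shows "h a u \<le> h a x - f a x * (u - x)"
proof -
  have cvx: "convex_on {0..1} (\<lambda>u. - h a u)"
  proof (rule convex_onI)
    fix t x y :: real assume "t > 0" "t < 1" "x \<in> {0..1}" "y \<in> {0..1}"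
    then show "- h a ((1 - t) *\<^sub>R x + t *\<^sub>R y) \<le> (1 - t) * - h a x + t * - h a y"
      using concave_le[OF assms(1), of x y t] by simp
  qed (simp add: convex_real_interval)
  have "((\<lambda>u. - h a u) has_field_derivative (f a x)) (at x within {0..1})"
    using DERIV_minus[OF h_deriv[OF assms(1-3)]] by (simp add: has_field_derivative_at_within)
  from convex_on_imp_above_tangent[OF cvx _ _ _ this, of u] assms
  show ?thesis by (simp add: algebra_simps)
qed

lemma neg_summable:
  assumes "p \<in> prob_dists A" "j \<in> {1..n}"
  shows "(\<lambda>a. p a * max (- H j a) 0) summable_on A"
proof -
  obtain c where c: "\<forall>a\<in>A. c \<le> H j a" using H_bdd_below[OF assms(2)] by blast
  have "p summable_on A" using assms(1) by (auto simp: prob_dists_def has_sum_iff)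
  then have "(\<lambda>a. p a * max (- c) 0) summable_on A" by (rule summable_on_cmult_left)
  then show ?thesis
    by (rule summable_on_comparison_test)
       (use c prob_bounds[OF assms(1)] in \<open>auto intro!: mult_left_mono\<close>)
qed

lemma pos_nonneg: "p \<in> prob_dists A \<Longrightarrow> a \<in> A \<Longrightarrow> 0 \<le> p a * max (X a) 0"
  using prob_bounds by simp

lemma pair_val:
  assumes "p \<in> prob_dists A" "j \<in> {1..n}"
  shows "(\<lambda>a. p a * max (H j a) 0) summable_on A \<Longrightarrow>
      pair A p (H j) = ereal (infsum (\<lambda>a. p a * max (H j a) 0) A - infsum (\<lambda>a. p a * max (- H j a) 0) A)"
    and "\<not> (\<lambda>a. p a * max (H j a) 0) summable_on A \<Longrightarrow> pair A p (H j) = \<infinity>"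
proof -
  have N: "(\<Sum>\<^sub>\<infinity>a\<in>A. ennreal (p a * max (- H j a) 0)) = ennreal (infsum (\<lambda>a. p a * max (- H j a) 0) A)"
    by (rule enn_infsum_summable[OF neg_summable[OF assms]]) (rule pos_nonneg[OF assms(1)])
  have N0: "0 \<le> infsum (\<lambda>a. p a * max (- H j a) 0) A"
    by (rule infsum_nonneg) (rule pos_nonneg[OF assms(1)])
  {
    assume s: "(\<lambda>a. p a * max (H j a) 0) summable_on A"
    have P: "(\<Sum>\<^sub>\<infinity>a\<in>A. ennreal (p a * max (H j a) 0)) = ennreal (infsum (\<lambda>a. p a * max (H j a) 0) A)"
      by (rule enn_infsum_summable[OF s]) (rule pos_nonneg[OF assms(1)])
    have P0: "0 \<le> infsum (\<lambda>a. p a * max (H j a) 0) A"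
      by (rule infsum_nonneg) (rule pos_nonneg[OF assms(1)])
    show "pair A p (H j) = ereal (infsum (\<lambda>a. p a * max (H j a) 0) A - infsum (\<lambda>a. p a * max (- H j a) 0) A)"
      unfolding pair_def P N using P0 N0 by (simp add: enn2ereal_ennreal)
  }
  {
    assume s: "\<not> (\<lambda>a. p a * max (H j a) 0) summable_on A"
    have P: "(\<Sum>\<^sub>\<infinity>a\<in>A. ennreal (p a * max (H j a) 0)) = \<infinity>"
      by (rule enn_infsum_not_summable[OF s]) (rule pos_nonneg[OF assms(1)])
    show "pair A p (H j) = \<infinity>"
      unfolding pair_def P N using N0 by (simp add: enn2ereal_ennreal)
  }
qed

lemma ent_val:
  assumes "p \<in> prob_dists A"
  shows "(\<lambda>a. h a (p a)) summable_on A \<Longrightarrow> gen_entropy A h p = ereal (infsum (\<lambda>a. h a (p a)) A)"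
    and "\<not> (\<lambda>a. h a (p a)) summable_on A \<Longrightarrow> gen_entropy A h p = \<infinity>"
proof -
  have nn: "\<And>a. a \<in> A \<Longrightarrow> 0 \<le> h a (p a)" using h_nonneg prob_bounds[OF assms] by blast
  show "(\<lambda>a. h a (p a)) summable_on A \<Longrightarrow> gen_entropy A h p = ereal (infsum (\<lambda>a. h a (p a)) A)"
    unfolding gen_entropy_def using enn_infsum_summable[of "\<lambda>a. h a (p a)" A, OF _ nn] infsum_nonneg[of A "\<lambda>a. h a (p a)", OF nn]
    by simp
  show "\<not> (\<lambda>a. h a (p a)) summable_on A \<Longrightarrow> gen_entropy A h p = \<infinity>"
    unfolding gen_entropy_def using enn_infsum_not_summable[of "\<lambda>a. h a (p a)" A, OF _ nn] by simp
qed


lemma rep: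
  assumes p: "p \<in> prob_dists A" and fp: "fin p"
  shows "vp_defined A h n H \<theta> p"
    and "((\<lambda>a. G a (p a)) has_sum infsum (\<lambda>a. G a (p a)) A) A"
    and "vp_obj A h n H \<theta> p = ereal (infsum (\<lambda>a. G a (p a)) A)"
proof -
  define Ih where "Ih = infsum (\<lambda>a. h a (p a)) A"
  define D where "D j = infsum (\<lambda>a. p a * max (H j a) 0) A - infsum (\<lambda>a. p a * max (- H j a) 0) A" for j
  have hs: "(\<lambda>a. h a (p a)) summable_on A" using fp by (simp add: fin_def)
  have E: "gen_entropy A h p = ereal Ih" using ent_val(1)[OF p hs] by (simp add: Ih_def)
  have T: "ereal (\<theta> j) * pair A p (H j) = ereal (\<theta> j * D j)" if "j \<in> {1..n}" for j
  proof (cases "\<theta> j = 0")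
    case True then show ?thesis by (simp add: zero_ereal_def[symmetric])
  next
    case False then have "j \<in> J" using that by (simp add: J_def)
    then have "(\<lambda>a. p a * max (H j a) 0) summable_on A" using fp by (simp add: fin_def)
    then show ?thesis using pair_val(1)[OF p that] by (simp add: D_def)
  qed
  have terms: "vp_terms A h n H \<theta> p = insert (ereal Ih) ((\<lambda>j. - ereal (\<theta> j * D j)) ` {1..n})"
  proof -
    have "(\<lambda>j. - (ereal (\<theta> j) * pair A p (H j))) ` {1..n} = (\<lambda>j. - ereal (\<theta> j * D j)) ` {1..n}"
      by (rule image_cong) (simp_all add: T)
    then show ?thesis unfolding vp_terms_def E by simp
  qed
  show "vp_defined A h n H \<theta> p" unfolding vp_defined_def terms by auto
  have HS: "((\<lambda>a. G a (p a)) has_sum (Ih - (\<Sum>j\<in>J. \<theta> j * D j))) A"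
  proof -
    have h1: "((\<lambda>a. h a (p a)) has_sum Ih) A" using hs by (simp add: Ih_def)
    have h2: "((\<lambda>a. \<Sum>j\<in>J. \<theta> j * (p a * max (H j a) 0 - p a * max (- H j a) 0)) has_sum (\<Sum>j\<in>J. \<theta> j * D j)) A"
      apply (rule has_sum_sum'[OF J_sub(2)])
      apply (rule has_sum_cmult_right)
      unfolding D_def apply (rule has_sum_diff')
      using fp neg_summable[OF p] J_sub(1) by (auto simp: fin_def)
    have eq: "h a (p a) - (\<Sum>j\<in>J. \<theta> j * (p a * max (H j a) 0 - p a * max (- H j a) 0)) = G a (p a)" for a
    proof -
      have "p a * max (H j a) 0 - p a * max (- H j a) 0 = p a * H j a" for j
        by (simp add: max_def algebra_simps)
      then show ?thesis unfolding G_def K_def sum_J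
        by (simp add: sum_distrib_left algebra_simps)
    qed
    show ?thesis using has_sum_diff'[OF h1 h2] by (simp add: eq)
  qed
  then show "((\<lambda>a. G a (p a)) has_sum infsum (\<lambda>a. G a (p a)) A) A"
    using has_sum_iff by blast
  have "vp_obj A h n H \<theta> p = ereal Ih - (\<Sum>j\<in>{1..n}. ereal (\<theta> j * D j))"
    unfolding vp_obj_def E using T by simp
  also have "(\<Sum>j\<in>{1..n}. ereal (\<theta> j * D j)) = ereal (\<Sum>j\<in>J. \<theta> j * D j)"
    by (simp only: sum_ereal sum_J)
  also have "ereal Ih - ereal (\<Sum>j\<in>J. \<theta> j * D j) = ereal (Ih - (\<Sum>j\<in>J. \<theta> j * D j))" by simp
  also have "Ih - (\<Sum>j\<in>J. \<theta> j * D j) = infsum (\<lambda>a. G a (p a)) A"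
    using HS by (simp add: has_sum_iff)
  finally show "vp_obj A h n H \<theta> p = ereal (infsum (\<lambda>a. G a (p a)) A)" .
qed

lemma neginf:
  assumes p: "p \<in> prob_dists A" and d: "vp_defined A h n H \<theta> p"
    and j: "j \<in> {1..n}" "\<theta> j > 0" and ns: "\<not> (\<lambda>a. p a * max (H j a) 0) summable_on A"
  shows "vp_obj A h n H \<theta> p = -\<infinity>"
proof -
  have pj: "pair A p (H j) = \<infinity>" using pair_val(2)[OF p j(1) ns] .
  then have tj: "ereal (\<theta> j) * pair A p (H j) = \<infinity>" using j by simp
  then have "-\<infinity> \<in> vp_terms A h n H \<theta> p" unfolding vp_terms_def using j
    by (auto intro!: image_eqI[where x=j])
  then have "\<infinity> \<notin> vp_terms A h n H \<theta> p" using d by (auto simp: vp_defined_def)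
  then have Ine: "gen_entropy A h p \<noteq> \<infinity>" by (auto simp: vp_terms_def)
  have "(\<Sum>j\<in>{1..n}. ereal (\<theta> j) * pair A p (H j)) = \<infinity>"
    using tj j by (subst sum_Pinfty) auto
  then show ?thesis unfolding vp_obj_def using Ine by (cases "gen_entropy A h p") auto
qed

lemma fin_of:
  assumes p: "p \<in> prob_dists A" and d: "vp_defined A h n H \<theta> p"
    and f: "\<bar>vp_obj A h n H \<theta> p\<bar> \<noteq> \<infinity>"
  shows "fin p"
proof (rule ccontr)
  assume nf: "\<not> fin p"
  show False
  proof (cases "(\<lambda>a. h a (p a)) summable_on A")
    case False
    then have I: "gen_entropy A h p = \<infinity>" using ent_val(2)[OF p] by simp
    then have "\<infinity> \<in> vp_terms A h n H \<theta> p" by (simp add: vp_terms_def)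
    then have "-\<infinity> \<notin> vp_terms A h n H \<theta> p" using d by (auto simp: vp_defined_def)
    then have "\<forall>j\<in>{1..n}. ereal (\<theta> j) * pair A p (H j) \<noteq> \<infinity>"
      unfolding vp_terms_def by (auto simp: image_iff)
    then have "(\<Sum>j\<in>{1..n}. ereal (\<theta> j) * pair A p (H j)) \<noteq> \<infinity>"
      by (subst sum_Pinfty) auto
    then have "vp_obj A h n H \<theta> p = \<infinity>" unfolding vp_obj_def I
      by (cases "(\<Sum>j\<in>{1..n}. ereal (\<theta> j) * pair A p (H j))") auto
    then show False using f by simp
  next
    case True
    with nf obtain j where jJ: "j \<in> J" and ns: "\<not> (\<lambda>a. p a * max (H j a) 0) summable_on A"
      by (auto simp: fin_def)
    have j: "j \<in> {1..n}" "\<theta> j \<noteq> 0" using jJ by (auto simp: J_def)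
    have pj: "pair A p (H j) = \<infinity>" using pair_val(2)[OF p j(1) ns] .
    show False
    proof (cases "\<theta> j > 0")
      case True
      then show False using neginf[OF p d j(1) True ns] f by simp
    next
      case False
      then have tj: "ereal (\<theta> j) * pair A p (H j) = -\<infinity>" using j pj by simp
      then have "\<infinity> \<in> vp_terms A h n H \<theta> p" unfolding vp_terms_def using j
        by (auto intro!: image_eqI[where x=j])
      then have "-\<infinity> \<notin> vp_terms A h n H \<theta> p" using d by (auto simp: vp_defined_def)
      then have "\<forall>k\<in>{1..n}. ereal (\<theta> k) * pair A p (H k) \<noteq> \<infinity>"
        unfolding vp_terms_def by (auto simp: image_iff)
      then have "(\<Sum>k\<in>{1..n}. ereal (\<theta> k) * pair A p (H k)) = -\<infinity>"
        using sum_Minfty'[of "{1..n}" "\<lambda>k. ereal (\<theta> k) * pair A p (H k)" j] tj j by auto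
      then have "vp_obj A h n H \<theta> p = \<infinity>" unfolding vp_obj_def
        by (cases "gen_entropy A h p") auto
      then show False using f by simp
    qed
  qed
qed


lemma summable_sum':
  fixes g :: "'j \<Rightarrow> 'a \<Rightarrow> real"
  assumes "finite I" "\<And>j. j \<in> I \<Longrightarrow> g j summable_on A"
  shows "(\<lambda>x. \<Sum>j\<in>I. g j x) summable_on A"
proof -
  have "((\<lambda>x. \<Sum>j\<in>I. g j x) has_sum (\<Sum>j\<in>I. infsum (g j) A)) A"
    by (rule has_sum_sum'[OF assms(1)]) (use assms(2) in auto)
  then show ?thesis by (auto simp: summable_on_def)
qed

lemma G_eq: "G a (p a) = h a (p a) - (\<Sum>j\<in>J. \<theta> j * (p a * max (H j a) 0 - p a * max (- H j a) 0))"
proof -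
  have e: "\<And>j. p a * max (H j a) 0 - p a * max (- H j a) 0 = p a * H j a"
    by (simp add: max_def algebra_simps)
  have "K a = (\<Sum>j\<in>J. \<theta> j * H j a)" unfolding K_def by (rule sum_J)
  then have "p a * K a = (\<Sum>j\<in>J. \<theta> j * (p a * H j a))"
    by (simp add: sum_distrib_left mult.left_commute)
  then show ?thesis unfolding G_def e by (simp add: mult.commute)
qed

lemma two_le:
  assumes "p \<in> prob_dists A" "a \<in> A" "b \<in> A" "a \<noteq> b"
  shows "p a + p b \<le> 1"
proof -
  from assms have nn: "\<And>x. x \<in> A \<Longrightarrow> 0 \<le> p x" and hs: "(p has_sum 1) A"
    by (auto simp: prob_dists_def)
  have "sum p {a,b} \<le> infsum p A"
    by (rule finite_sum_le_infsum) (use hs nn assms in \<open>auto simp: has_sum_iff\<close>)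
  then show ?thesis using hs assms(4) by (simp add: has_sum_iff)
qed

lemma pointwise:
  assumes ps: "ps \<in> prob_dists A" and p: "p \<in> prob_dists A"
    and al: "\<forall>a\<in>A. 0 < ps a \<and> f a (ps a) = -\<alpha> - K a" and a: "a \<in> A"
  shows "G a (p a) - \<alpha> * p a \<le> G a (ps a) - \<alpha> * ps a"
proof (cases "ps a < 1")
  case True
  have "h a (p a) \<le> h a (ps a) - f a (ps a) * (p a - ps a)"
    using tangent[OF a _ True] al a prob_bounds[OF p a] by auto
  moreover have "- f a (ps a) * (p a - ps a) = (\<alpha> + K a) * (p a - ps a)" using al a by simp
  ultimately have "h a (p a) \<le> h a (ps a) + (\<alpha> + K a) * (p a - ps a)" by linarith
  then show ?thesis unfolding G_def by (simp add: algebra_simps)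
next
  case False
  then have psa: "ps a = 1" using prob_bounds[OF ps a] by simp
  have A1: "A = {a}"
  proof -
    have "b = a" if "b \<in> A" for b
    proof (rule ccontr)
      assume "b \<noteq> a"
      then have "ps a + ps b \<le> 1" using two_le[OF ps a that] by simp
      then show False using al that psa by force
    qed
    then show ?thesis using a by blast
  qed
  have "(p has_sum 1) A" using p by (simp add: prob_dists_def)
  then have "p a = 1" unfolding A1 by (simp add: has_sum_iff)
  then show ?thesis using psa by simp
qed

lemma suff:
  assumes ps: "ps \<in> prob_dists A" and d: "vp_defined A h n H \<theta> ps"
    and fo: "\<bar>vp_obj A h n H \<theta> ps\<bar> \<noteq> \<infinity>"
    and al: "\<forall>a\<in>A. 0 < ps a \<and> f a (ps a) = -\<alpha> - K a"
  shows "variational_principle A h n H \<theta> ps"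
proof -
  have fps: "fin ps" by (rule fin_of[OF ps d fo])
  have obj_lt: "vp_obj A h n H \<theta> ps < \<infinity>" using fo by auto
  have "vp_obj A h n H \<theta> p \<le> vp_obj A h n H \<theta> ps"
    if p: "p \<in> prob_dists A" and dp: "vp_defined A h n H \<theta> p" for p
  proof (cases "\<exists>j\<in>{1..n}. \<theta> j > 0 \<and> \<not> (\<lambda>a. p a * max (H j a) 0) summable_on A")
    case True
    then obtain j where j: "j \<in> {1..n}" "\<theta> j > 0" "\<not> (\<lambda>a. p a * max (H j a) 0) summable_on A"
      by blast
    show ?thesis using neginf[OF p dp j] by simp
  next
    case False
    then have posP: "\<And>j. j \<in> {1..n} \<Longrightarrow> \<theta> j > 0 \<Longrightarrow> (\<lambda>a. p a * max (H j a) 0) summable_on A"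
      by blast
    define P where "P j a = p a * max (H j a) 0" for j a
    define N where "N j a = p a * max (- H j a) 0" for j a
    define L where "L a = h a (p a) + (\<Sum>j\<in>J. max (- \<theta> j) 0 * P j a)" for a
    define R where "R a = G a (ps a) - \<alpha> * ps a" for a
    define U where "U a = R a + \<alpha> * p a + (\<Sum>j\<in>J. max (\<theta> j) 0 * P j a) - (\<Sum>j\<in>J. \<theta> j * N j a)" for a
    have Pnn: "0 \<le> P j a" if "a \<in> A" for j a using prob_bounds[OF p that] by (simp add: P_def)
    have hnn: "0 \<le> h a (p a)" if "a \<in> A" for a using h_nonneg[OF that] prob_bounds[OF p that] by simp
    have Lnn: "0 \<le> L a" if "a \<in> A" for a
      unfolding L_def using hnn[OF that] Pnn[OF that] by (intro add_nonneg_nonneg sum_nonneg) auto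
    have LU: "L a \<le> U a" if "a \<in> A" for a
    proof -
      have s: "(\<Sum>j\<in>J. \<theta> j * (P j a - N j a)) =
          (\<Sum>j\<in>J. max (\<theta> j) 0 * P j a) - (\<Sum>j\<in>J. max (- \<theta> j) 0 * P j a) - (\<Sum>j\<in>J. \<theta> j * N j a)"
      proof -
        have "\<theta> j * (P j a - N j a) = max (\<theta> j) 0 * P j a - max (- \<theta> j) 0 * P j a - \<theta> j * N j a" for j
          by (cases "\<theta> j \<ge> 0") (auto simp: max_def algebra_simps)
        then have "(\<Sum>j\<in>J. \<theta> j * (P j a - N j a)) = (\<Sum>j\<in>J. max (\<theta> j) 0 * P j a - max (- \<theta> j) 0 * P j a - \<theta> j * N j a)"
          by simp
        then show ?thesis by (simp add: sum_subtractf)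
      qed
      have "G a (p a) - \<alpha> * p a \<le> R a" unfolding R_def by (rule pointwise[OF ps p al that])
      then show ?thesis using s unfolding G_eq[of a p] L_def U_def P_def N_def by simp
    qed
    have hs_ps: "((\<lambda>a. G a (ps a)) has_sum infsum (\<lambda>a. G a (ps a)) A) A" by (rule rep(2)[OF ps fps])
    have ps1: "(ps has_sum 1) A" and p1: "(p has_sum 1) A" using ps p by (auto simp: prob_dists_def)
    have Rs: "(R has_sum (infsum (\<lambda>a. G a (ps a)) A - \<alpha> * 1)) A"
      unfolding R_def by (intro has_sum_diff' hs_ps has_sum_cmult_right ps1)
    have s1: "R summable_on A" using Rs by (auto simp: summable_on_def)
    have s2: "(\<lambda>a. \<alpha> * p a) summable_on A"
      using p1 by (intro summable_on_cmult_right) (auto simp: summable_on_def)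
    have s3: "(\<lambda>a. \<Sum>j\<in>J. max (\<theta> j) 0 * P j a) summable_on A"
    proof (rule summable_sum'[OF J_sub(2)])
      fix j assume jJ: "j \<in> J"
      then have j: "j \<in> {1..n}" using J_sub by auto
      show "(\<lambda>a. max (\<theta> j) 0 * P j a) summable_on A"
      proof (cases "\<theta> j > 0")
        case True then show ?thesis unfolding P_def by (intro summable_on_cmult_right posP j)
      next
        case False then show ?thesis by simp
      qed
    qed
    have s4: "(\<lambda>a. \<Sum>j\<in>J. \<theta> j * N j a) summable_on A"
    proof (rule summable_sum'[OF J_sub(2)])
      fix j assume jJ: "j \<in> J"
      then have j: "j \<in> {1..n}" using J_sub by auto
      show "(\<lambda>a. \<theta> j * N j a) summable_on A"
        unfolding N_def by (intro summable_on_cmult_right neg_summable[OF p j])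
    qed
    have Us: "U summable_on A"
      unfolding U_def by (intro summable_on_diff' summable_on_add s1 s2 s3 s4)
    have Ls: "L summable_on A"
      by (rule summable_on_comparison_test[OF Us]) (use LU Lnn in auto)
    have fp: "fin p"
      unfolding fin_def
    proof (intro conjI ballI)
      show "(\<lambda>a. h a (p a)) summable_on A"
        by (rule summable_on_comparison_test[OF Ls])
           (use hnn Pnn in \<open>auto simp: L_def intro!: sum_nonneg\<close>)
      fix j assume jJ: "j \<in> J"
      then have j: "j \<in> {1..n}" "\<theta> j \<noteq> 0" using J_sub by (auto simp: J_def)
      show "(\<lambda>a. p a * max (H j a) 0) summable_on A"
      proof (cases "\<theta> j > 0")
        case True then show ?thesis using posP j by blast
      next
        case False
        then have tneg: "- \<theta> j > 0" using j by simp
        have "(\<lambda>a. (- \<theta> j) * P j a) summable_on A"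
        proof (rule summable_on_comparison_test[OF Ls])
          fix a assume a: "a \<in> A"
          have "max (- \<theta> j) 0 * P j a \<le> (\<Sum>j\<in>J. max (- \<theta> j) 0 * P j a)"
            by (rule member_le_sum) (use jJ Pnn[OF a] J_sub in auto)
          then show "- \<theta> j * P j a \<le> L a" using tneg hnn[OF a] unfolding L_def by simp
          show "0 \<le> - \<theta> j * P j a" using tneg Pnn[OF a, of j] by (simp add: mult_nonpos_nonneg)
        qed
        then have "(\<lambda>a. (1 / (- \<theta> j)) * ((- \<theta> j) * P j a)) summable_on A"
          by (rule summable_on_cmult_right)
        then show ?thesis using tneg unfolding P_def by simp
      qed
    qed
    have hs_p: "((\<lambda>a. G a (p a)) has_sum infsum (\<lambda>a. G a (p a)) A) A" by (rule rep(2)[OF p fp])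
    have "infsum (\<lambda>a. G a (p a)) A - \<alpha> * 1 \<le> infsum (\<lambda>a. G a (ps a)) A - \<alpha> * 1"
    proof (rule has_sum_mono[OF _ Rs])
      show "((\<lambda>a. G a (p a) - \<alpha> * p a) has_sum infsum (\<lambda>a. G a (p a)) A - \<alpha> * 1) A"
        by (intro has_sum_diff' hs_p has_sum_cmult_right p1)
      show "\<And>a. a \<in> A \<Longrightarrow> G a (p a) - \<alpha> * p a \<le> R a"
        unfolding R_def using pointwise[OF ps p al] by blast
    qed
    then show ?thesis using rep(3)[OF p fp] rep(3)[OF ps fps] by simp
  qed
  then show ?thesis unfolding variational_principle_def using ps d obj_lt by blast
qed


lemma pert:
  assumes vp: "variational_principle A h n H \<theta> ps"
    and fo: "\<bar>vp_obj A h n H \<theta> ps\<bar> \<noteq> \<infinity>"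
    and a: "a \<in> A" and b: "b \<in> A" and ab: "a \<noteq> b"
    and t1: "0 \<le> ps a + t" and t2: "0 \<le> ps b - t"
  shows "G a (ps a + t) + G b (ps b - t) \<le> G a (ps a) + G b (ps b)"
proof -
  have ps: "ps \<in> prob_dists A" and d: "vp_defined A h n H \<theta> ps"
    and opt: "\<And>p. p \<in> prob_dists A \<Longrightarrow> vp_defined A h n H \<theta> p \<Longrightarrow>
                  vp_obj A h n H \<theta> p \<le> vp_obj A h n H \<theta> ps"
    using vp by (auto simp: variational_principle_def)
  have fps: "fin ps" by (rule fin_of[OF ps d fo])
  define q where "q = ps(a := ps a + t, b := ps b - t)"
  have qa: "q a = ps a + t" and qb: "q b = ps b - t" using ab by (auto simp: q_def)
  have qo: "\<And>x. x \<in> A - {a,b} \<Longrightarrow> q x = ps x" by (auto simp: q_def)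
  have AF: "A \<inter> {a,b} = {a,b}" using a b by auto
  have gen: "(g has_sum (s + ((g a - g' a) + (g b - g' b)))) A"
    if "(g' has_sum s) A" "\<And>x. x \<in> A - {a,b} \<Longrightarrow> g x = g' x" for g g' :: "'a \<Rightarrow> real" and s
    using has_sum_finite_change[OF that(1), of "{a,b}" g] that(2) ab unfolding AF by simp
  have q: "q \<in> prob_dists A"
  proof -
    have "(ps has_sum 1) A" using ps by (simp add: prob_dists_def)
    from gen[OF this, of q] qo have "(q has_sum 1) A" by (simp add: qa qb)
    moreover have "\<forall>x\<in>A. 0 \<le> q x" using prob_bounds(1)[OF ps] t1 t2 by (auto simp: q_def)
    ultimately show ?thesis by (simp add: prob_dists_def)
  qed
  have fq: "fin q"
    unfolding fin_def
  proof (intro conjI ballI)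
    have "((\<lambda>x. h x (ps x)) has_sum infsum (\<lambda>x. h x (ps x)) A) A"
      using fps by (simp add: fin_def)
    from gen[OF this, of "\<lambda>x. h x (q x)"] qo show "(\<lambda>x. h x (q x)) summable_on A"
      by (auto simp: summable_on_def)
    fix j assume "j \<in> J"
    then have "((\<lambda>x. ps x * max (H j x) 0) has_sum infsum (\<lambda>x. ps x * max (H j x) 0) A) A"
      using fps by (simp add: fin_def)
    from gen[OF this, of "\<lambda>x. q x * max (H j x) 0"] qo show "(\<lambda>x. q x * max (H j x) 0) summable_on A"
      by (auto simp: summable_on_def)
  qed
  have hq: "((\<lambda>x. G x (q x)) has_sum infsum (\<lambda>x. G x (q x)) A) A" by (rule rep(2)[OF q fq])
  have hps: "((\<lambda>x. G x (ps x)) has_sum infsum (\<lambda>x. G x (ps x)) A) A" by (rule rep(2)[OF ps fps])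
  from gen[OF hps, of "\<lambda>x. G x (q x)"] qo
  have "((\<lambda>x. G x (q x)) has_sum (infsum (\<lambda>x. G x (ps x)) A +
        ((G a (q a) - G a (ps a)) + (G b (q b) - G b (ps b))))) A" by simp
  then have eq: "infsum (\<lambda>x. G x (q x)) A = infsum (\<lambda>x. G x (ps x)) A +
        ((G a (q a) - G a (ps a)) + (G b (q b) - G b (ps b)))"
    by (simp add: has_sum_iff)
  have "vp_obj A h n H \<theta> q \<le> vp_obj A h n H \<theta> ps" by (rule opt[OF q rep(1)[OF q fq]])
  then have "infsum (\<lambda>x. G x (q x)) A \<le> infsum (\<lambda>x. G x (ps x)) A"
    using rep(3)[OF q fq] rep(3)[OF ps fps] by simp
  then show ?thesis using eq qa qb by simp
qed


lemma pos:
  assumes vp: "variational_principle A h n H \<theta> ps"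
    and fo: "\<bar>vp_obj A h n H \<theta> ps\<bar> \<noteq> \<infinity>"
    and a: "a \<in> A"
  shows "0 < ps a"
proof (rule ccontr)
  assume "\<not> 0 < ps a"
  have ps: "ps \<in> prob_dists A" using vp by (simp add: variational_principle_def)
  then have pa: "ps a = 0" using prob_bounds(1)[OF ps a] \<open>\<not> 0 < ps a\<close> by simp
  have hs1: "(ps has_sum 1) A" using ps by (simp add: prob_dists_def)
  obtain b where b: "b \<in> A" "0 < ps b"
  proof (rule ccontr)
    assume "\<not> thesis"
    then have "\<forall>b\<in>A. ps b = 0" using that prob_bounds(1)[OF ps] by force
    then have "((\<lambda>_. 0::real) has_sum 1) A" using hs1 by (metis has_sum_cong)
    then show False using has_sum_0_simp has_sum_unique by fastforce
  qed
  have ab: "a \<noteq> b" using b pa by auto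
  define s where "s = ps b"
  have s0: "0 < s" and s1: "s \<le> 1" using b prob_bounds(2)[OF ps b(1)] by (auto simp: s_def)
  define M where "M = h b s / s - K b + K a + 1"
  have "\<forall>\<^sub>F x in at_right 0. f a x \<le> - M"
    using f_at_0[OF a] by (simp add: filterlim_at_bot)
  then obtain \<delta> :: real where d0: "\<delta> > 0" and dM: "\<And>y. 0 < y \<Longrightarrow> y < \<delta> \<Longrightarrow> f a y \<le> - M"
    unfolding eventually_at_right_field by auto
  define t where "t = min (\<delta>/2) (s/2)"
  have t0: "0 < t" and td: "t < \<delta>" and ts: "t < s" and t1: "t < 1"
    using d0 s0 s1 by (auto simp: t_def)
  have P: "G a (ps a + t) + G b (ps b - t) \<le> G a (ps a) + G b (ps b)"
    by (rule pert[OF vp fo a b(1) ab]) (use pa t0 ts in \<open>auto simp: s_def\<close>)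
  have cont: "continuous_on {0..t} (h a)"
    by (rule continuous_on_subset[OF h_cont[OF a]]) (use t1 in auto)
  have dif: "\<And>x. 0 < x \<Longrightarrow> x < t \<Longrightarrow> h a differentiable (at x)"
    using h_deriv[OF a] t1 unfolding real_differentiable_def by (meson less_trans)
  have "\<exists>l z. 0 < z \<and> z < t \<and> DERIV (h a) z :> l \<and> h a t - h a 0 = (t - 0) * l"
    by (rule MVT[OF t0 cont dif])
  then obtain l z where z: "0 < z" "z < t" "DERIV (h a) z :> l" "h a t - h a 0 = (t - 0) * l" by blast
  have "l = - f a z" using DERIV_unique[OF z(3) h_deriv[OF a z(1)]] z t1 by simp
  then have hteq: "h a t = t * (- f a z)" using z(4) h_0[OF a] by simp
  have fz: "M \<le> - f a z" using dM[of z] z td by simp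
  have hat: "h a t \<ge> t * M" unfolding hteq using mult_left_mono[OF fz, of t] t0 by simp
  define \<tau> where "\<tau> = (s - t) / s"
  have tau0: "0 \<le> \<tau>" "\<tau> \<le> 1" using ts s0 t0 by (auto simp: \<tau>_def)
  have "(1 - \<tau>) * h b 0 + \<tau> * h b s \<le> h b ((1 - \<tau>) * 0 + \<tau> * s)"
    by (rule concave_le[OF b(1)]) (use s0 s1 tau0 in auto)
  moreover have "\<tau> * s = s - t" using s0 by (simp add: \<tau>_def)
  moreover have "\<tau> * h b s = h b s - t * (h b s / s)" using s0 by (simp add: \<tau>_def field_simps)
  ultimately have hb: "h b (s - t) \<ge> h b s - t * (h b s / s)" using h_0[OF b(1)] by simp
  have "t * M = t * (h b s / s) - t * K b + t * K a + t" by (simp add: M_def algebra_simps)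
  then show False using P hat hb t0 h_0[OF a] pa unfolding G_def s_def[symmetric]
    by (simp add: algebra_simps)
qed


lemma G_deriv:
  assumes a: "a \<in> A" and x: "0 < x" "x < 1"
  shows "DERIV (G a) x :> (- f a x - K a)"
proof -
  have "((\<lambda>u. h a u - u * K a) has_real_derivative (- f a x - 1 * K a)) (at x)"
    by (rule DERIV_diff[OF h_deriv[OF a x] DERIV_cmult_right[OF DERIV_ident]])
  then show ?thesis by (simp add: G_def[abs_def])
qed

lemma deriv_eq:
  assumes vp: "variational_principle A h n H \<theta> ps"
    and fo: "\<bar>vp_obj A h n H \<theta> ps\<bar> \<noteq> \<infinity>"
    and a: "a \<in> A" and b: "b \<in> A" and ab: "a \<noteq> b"
  shows "f a (ps a) + K a = f b (ps b) + K b"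
proof -
  have ps: "ps \<in> prob_dists A" using vp by (simp add: variational_principle_def)
  have pa: "0 < ps a" and pb: "0 < ps b" using pos[OF vp fo] a b by auto
  have "ps a + ps b \<le> 1" by (rule two_le[OF ps a b ab])
  then have pa1: "ps a < 1" and pb1: "ps b < 1" using pa pb by auto
  define \<psi> where "\<psi> t = G a (ps a + t) + G b (ps b - t)" for t
  have d1: "DERIV (\<lambda>t. G a (ps a + t)) 0 :> (- f a (ps a) - K a) * 1"
    by (rule DERIV_chain2[of "G a"]) (use G_deriv[OF a pa pa1] in \<open>auto intro!: derivative_eq_intros\<close>)
  have d2: "DERIV (\<lambda>t. G b (ps b - t)) 0 :> (- f b (ps b) - K b) * (-1)"
    by (rule DERIV_chain2[of "G b"]) (use G_deriv[OF b pb pb1] in \<open>auto intro!: derivative_eq_intros\<close>)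
  have D: "DERIV \<psi> 0 :> ((- f a (ps a) - K a) * 1 + (- f b (ps b) - K b) * (-1))"
    unfolding \<psi>_def by (rule DERIV_add[OF d1 d2])
  have "(- f a (ps a) - K a) * 1 + (- f b (ps b) - K b) * (-1) = 0"
  proof (rule DERIV_local_max[OF D])
    show "0 < min (ps a) (ps b)" using pa pb by simp
    show "\<forall>y. \<bar>0 - y\<bar> < min (ps a) (ps b) \<longrightarrow> \<psi> y \<le> \<psi> 0"
    proof (intro allI impI)
      fix y assume "\<bar>0 - y\<bar> < min (ps a) (ps b)"
      then have "0 \<le> ps a + y" "0 \<le> ps b - y" by auto
      from pert[OF vp fo a b ab this] show "\<psi> y \<le> \<psi> 0" by (simp add: \<psi>_def)
    qed
  qed
  then show ?thesis by simp
qed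

lemma nec:
  assumes vp: "variational_principle A h n H \<theta> ps"
    and fo: "\<bar>vp_obj A h n H \<theta> ps\<bar> \<noteq> \<infinity>"
  shows "\<exists>\<alpha>::real. \<forall>a\<in>A. 0 < ps a \<and> f a (ps a) = - \<alpha> - K a"
proof -
  have ps: "ps \<in> prob_dists A" using vp by (simp add: variational_principle_def)
  have "A \<noteq> {}"
  proof
    assume "A = {}"
    then have "(ps has_sum 1) {}" using ps by (simp add: prob_dists_def)
    then show False using has_sum_unique[of ps "{}" 1 0] by simp
  qed
  then obtain a0 where a0: "a0 \<in> A" by blast
  show ?thesis
  proof (intro exI ballI conjI)
    fix a assume a: "a \<in> A"
    show "0 < ps a" by (rule pos[OF vp fo a])
    show "f a (ps a) = - (- (f a0 (ps a0) + K a0)) - K a"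
    proof (cases "a = a0")
      case True then show ?thesis by simp
    next
      case False
      from deriv_eq[OF vp fo a a0 False] show ?thesis by simp
    qed
  qed
qed

end

theorem theorem1:
  fixes A :: "'a set" and h f :: "'a \<Rightarrow> real \<Rightarrow> real"
    and n :: nat and H :: "nat \<Rightarrow> 'a \<Rightarrow> real" and \<theta> :: "nat \<Rightarrow> real"
    and ps :: "'a \<Rightarrow> real"
  assumes A_countable: "countable A"
    and h_cont: "\<And>a. a \<in> A \<Longrightarrow> continuous_on {0..1} (h a)"
    and h_strict_concave: "\<And>a. a \<in> A \<Longrightarrow> strictly_concave_on {0..1} (h a)"
    and h_0: "\<And>a. a \<in> A \<Longrightarrow> h a 0 = 0"
    and h_1: "\<And>a. a \<in> A \<Longrightarrow> h a 1 = 0"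
    and h_deriv: "\<And>a u. a \<in> A \<Longrightarrow> 0 < u \<Longrightarrow> u < 1 \<Longrightarrow>
                    (h a has_real_derivative - f a u) (at u)"
    and f_cont: "\<And>a. a \<in> A \<Longrightarrow> continuous_on {0<..1} (f a)"
    and f_at_0: "\<And>a. a \<in> A \<Longrightarrow> filterlim (f a) at_bot (at_right 0)"
    and H_bdd_below: "\<And>j. j \<in> {1..n} \<Longrightarrow> \<exists>c. \<forall>a\<in>A. c \<le> H j a"
    and ps_dist: "ps \<in> prob_dists A"
    and ps_finite: "vp_defined A h n H \<theta> ps" "\<bar>vp_obj A h n H \<theta> ps\<bar> \<noteq> \<infinity>"
  shows "variational_principle A h n H \<theta> ps \<longleftrightarrow>
         (\<exists>\<alpha>::real. \<forall>a\<in>A. 0 < ps a \<and>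
             f a (ps a) = - \<alpha> - (\<Sum>j\<in>{1..n}. \<theta> j * H j a))"
proof -
  interpret L: vp_setup A h f n H \<theta>
    using h_cont h_strict_concave h_0 h_1 h_deriv f_at_0 H_bdd_below by unfold_locales
  have K: "\<And>a. L.K a = (\<Sum>j\<in>{1..n}. \<theta> j * H j a)" by (simp add: L.K_def)
  show ?thesis
  proof
    assume "variational_principle A h n H \<theta> ps"
    from L.nec[OF this ps_finite(2)] show "\<exists>\<alpha>::real. \<forall>a\<in>A. 0 < ps a \<and>
             f a (ps a) = - \<alpha> - (\<Sum>j\<in>{1..n}. \<theta> j * H j a)" by (simp only: K)
  next
    assume "\<exists>\<alpha>::real. \<forall>a\<in>A. 0 < ps a \<and>
             f a (ps a) = - \<alpha> - (\<Sum>j\<in>{1..n}. \<theta> j * H j a)"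
    then obtain \<alpha> where "\<forall>a\<in>A. 0 < ps a \<and> f a (ps a) = - \<alpha> - L.K a" by (auto simp only: K)
    from L.suff[OF ps_dist ps_finite this] show "variational_principle A h n H \<theta> ps" .
  qed
qed

end
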